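(* Under the hypotheses of the Weights Lemma (so in particular $P\neq\emptyset$), one has $\widehat J(i)\in P$ for all $(J,i)\in\overline{\mathbb J}$, and $$P=\operatorname{conv}\{\widehat J(i):\ (J,i)\in\overline{\mathbb J}\}+\operatorname{cone}\{e_1,\ldots,e_n\},$$ where $\operatorname{conv}$ denotes convex hull and $\operatorname{cone}\{e_1,\ldots,e_n\}=\{\sum_i c_ie_i: c_i\ge0\}$.
   Context: Setting: $s,d_1,\ldots,d_n\ge0$ reals and $V_1,\ldots,V_n$ subspaces of a finite-dimensional real vector space with $\sum_{i\in I}d_i+\dim(\sum_{i\in I^c}V_i)\ge s$ for every $I\subset\{1,\ldots,n\}$ ($I^c$ the complement, empty sums $0$ / $\{0\}$); each $V_i$ has a fixed generating set $\{v^i_1,\ldots,v^i_{m_i}\}$. $P=\{(d_1,\ldots,d_n)\in\mathbb R^n: d_i\ge0\ \forall i,\ \sum_{i\in I}d_i+\dim(\sum_{i\in I^c}V_i)\ge s\ \forall I\subset\{1,\ldots,n\}\}$. $\mathbb J$ is the family of tuples $J=(\mathrm j_1,\ldots,\mathrm j_n)$, $\mathrm j_i\subset\{v^i_1,\ldots,v^i_{m_i}\}$, such that all elements of $\mathrm j_1,\ldots,\mathrm j_n$ taken together form a linearly independent family and $\#\mathrm j_1+\cdots+\#\mathrm j_n\ge s$; $\widehat J(i)=(\#\mathrm j_1,\ldots,\#\mathrm j_n)+(s-\sum_l\#\mathrm j_l)e_i$ with $e_i$ the canonical basis of $\mathbb R^n$; $\overline{\mathbb J}=\{(J,i)\in\mathbb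 J\times\{1,\ldots,n\}: \widehat J(i)\ge0\text{ coordinatewise}\}$. *)

theory Defs
  imports "HOL-Analysis.Analysis"
begin

text \<open>Indices i range over a finite type 'n (so n = CARD('n)); R^n is real^'n.
  The generators of V_i are v i 0, ..., v i (m i - 1).\<close>

definition Pset :: "real \<Rightarrow> ('n::finite \<Rightarrow> 'a::euclidean_space set) \<Rightarrow> (real^'n) set" where
  "Pset s V = {d. (\<forall>i. 0 \<le> d $ i) \<and>
      (\<forall>I. s \<le> (\<Sum>i\<in>I. d $ i) + real (dim (span (\<Union>i\<in>-I. V i))))}"

text \<open>A tuple J = (j_1,...,j_n) is given by index sets j i \<subseteq> {..<m i};
  the family of all chosen vectors (indexed by pairs (i,k)) must be linearly independent,
  i.e. injective on the index set with independent image.\<close>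
definition JJ :: "real \<Rightarrow> ('n::finite \<Rightarrow> nat) \<Rightarrow> ('n \<Rightarrow> nat \<Rightarrow> 'a::euclidean_space)
    \<Rightarrow> ('n \<Rightarrow> nat set) set" where
  "JJ s m v = {j. (\<forall>i. j i \<subseteq> {..<m i}) \<and>
      inj_on (\<lambda>(i,k). v i k) (Sigma UNIV j) \<and>
      independent ((\<lambda>(i,k). v i k) ` Sigma UNIV j) \<and>
      s \<le> (\<Sum>i\<in>UNIV. real (card (j i)))}"

definition Jhat :: "real \<Rightarrow> ('n::finite \<Rightarrow> nat set) \<Rightarrow> 'n \<Rightarrow> real^'n" where
  "Jhat s j i = (\<chi> l. real (card (j l))) + (s - (\<Sum>l\<in>UNIV. real (card (j l)))) *\<^sub>R axis i 1"

definition JJbar :: "real \<Rightarrow> ('n::finite \<Rightarrow> nat) \<Rightarrow> ('n \<Rightarrow> nat \<Rightarrow> 'a::euclidean_space)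
    \<Rightarrow> (('n \<Rightarrow> nat set) \<times> 'n) set" where
  "JJbar s m v = {(j, i). j \<in> JJ s m v \<and> (\<forall>l. 0 \<le> Jhat s j i $ l)}"

definition coord_cone :: "(real^'n::finite) set" where
  "coord_cone = {(\<Sum>i\<in>UNIV. c i *\<^sub>R axis i 1) | c. \<forall>i. 0 \<le> c i}"

end

theory Submission
  imports Defs
begin

lemma axis_comp: "axis k (x::real) $ l = (if l = k then x else 0)"
  by (simp add: axis_def)

lemma coord_cone_eq: "coord_cone = {y::real^'n::finite. \<forall>i. 0 \<le> y $ i}"
proof
  show "coord_cone \<subseteq> {y::real^'n::finite. \<forall>i. 0 \<le> y $ i}"
    by (auto simp: coord_cone_def axis_comp if_distrib sum.delta cong: if_cong)
  show "{y::real^'n::finite. \<forall>i. 0 \<le> y $ i} \<subseteq> coord_cone"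
  proof
    fix y :: "real^'n" assume "y \<in> {y. \<forall>i. 0 \<le> y $ i}"
    then have "\<forall>i. 0 \<le> y$i" by simp
    moreover have "y = (\<Sum>i\<in>UNIV. (y$i) *\<^sub>R axis i 1)"
      by (simp add: vec_eq_iff axis_comp if_distrib sum.delta cong: if_cong)
    ultimately show "y \<in> coord_cone" unfolding coord_cone_def by blast
  qed
qed

lemma closed_orthant: "closed {y::real^'n::finite. \<forall>i. 0 \<le> y $ i}"
proof -
  have "{y::real^'n::finite. \<forall>i. 0 \<le> y $ i} = (\<Inter>i. {y. 0 \<le> y $ i})" by auto
  moreover have "closed {y::real^'n. 0 \<le> y $ i}" for i
    using closed_halfspace_component_ge_cart[of 0 i] by simp
  ultimately show ?thesis by auto
qed

lemma span_V:
  assumes "\<forall>i. V i = span (v i ` {..<m i})"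
  shows "span (\<Union>i\<in>T. V i) = span ((\<lambda>(i,k). v i k) ` Sigma T (\<lambda>i. {..<m i}))"
proof
  have "V i \<subseteq> span ((\<lambda>(i,k). v i k) ` Sigma T (\<lambda>i. {..<m i}))" if "i \<in> T" for i
    using that assms by (auto intro!: span_mono)
  then show "span (\<Union>i\<in>T. V i) \<subseteq> span ((\<lambda>(i,k). v i k) ` Sigma T (\<lambda>i. {..<m i}))"
    by (metis (no_types, lifting) UN_least span_minimal subspace_span)
  have "(\<lambda>(i,k). v i k) ` Sigma T (\<lambda>i. {..<m i}) \<subseteq> (\<Union>i\<in>T. V i)"
    using assms by (auto intro: span_base)
  then show "span ((\<lambda>(i,k). v i k) ` Sigma T (\<lambda>i. {..<m i})) \<subseteq> span (\<Union>i\<in>T. V i)"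
    by (rule span_mono)
qed

lemma pset_convex: "convex (Pset s V)"
proof (rule convexI)
  fix x y :: "real^'a" and u w :: real
  assume "x \<in> Pset s V" "y \<in> Pset s V" and uw: "0 \<le> u" "0 \<le> w" "u + w = 1"
  then have x: "\<forall>i. 0 \<le> x $ i" "\<forall>I. s \<le> (\<Sum>i\<in>I. x $ i) + real (dim (span (\<Union>i\<in>- I. V i)))"
    and y: "\<forall>i. 0 \<le> y $ i" "\<forall>I. s \<le> (\<Sum>i\<in>I. y $ i) + real (dim (span (\<Union>i\<in>- I. V i)))"
    by (auto simp: Pset_def)
  have "s \<le> (\<Sum>i\<in>I. (u *\<^sub>R x + w *\<^sub>R y) $ i) + real (dim (span (\<Union>i\<in>- I. V i)))" for I
  proof -
    let ?D = "real (dim (span (\<Union>i\<in>- I. V i)))"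
    have "u * s \<le> u * ((\<Sum>i\<in>I. x $ i) + ?D)" using x uw by (simp add: mult_left_mono)
    moreover have "w * s \<le> w * ((\<Sum>i\<in>I. y $ i) + ?D)" using y uw by (simp add: mult_left_mono)
    ultimately have "(u + w) * s \<le> u * (\<Sum>i\<in>I. x $ i) + w * (\<Sum>i\<in>I. y $ i) + (u+w) * ?D"
      by (simp add: algebra_simps)
    then show ?thesis
      using uw by (simp add: sum.distrib sum_distrib_left)
  qed
  moreover have "0 \<le> (u *\<^sub>R x + w *\<^sub>R y) $ i" for i using x y uw by simp
  ultimately show "u *\<^sub>R x + w *\<^sub>R y \<in> Pset s V" by (simp add: Pset_def)
qed


lemma Jhat_comp: "Jhat s j i $ l = real (card (j l)) + (if l = i then s - (\<Sum>l\<in>UNIV. real (card (j l))) else 0)"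
  by (simp add: Jhat_def axis_comp)

lemma Jhat_in_P:
  assumes hV: "\<forall>i. V i = span (v i ` {..<m i})"
    and "(j, i) \<in> JJbar s m v"
  shows "Jhat s j i \<in> Pset s V"
proof -
  let ?vv = "\<lambda>(i,k). v i k"
  have jsub: "\<forall>i. j i \<subseteq> {..<m i}" and inj: "inj_on ?vv (Sigma UNIV j)"
    and ind: "independent (?vv ` Sigma UNIV j)"
    and stot: "s \<le> (\<Sum>i\<in>UNIV. real (card (j i)))"
    and nn: "\<forall>l. 0 \<le> Jhat s j i $ l"
    using assms(2) by (auto simp: JJbar_def JJ_def)
  have fin: "finite (j l)" for l using jsub finite_subset by blast
  have "s \<le> (\<Sum>l\<in>I. Jhat s j i $ l) + real (dim (span (\<Union>l\<in>- I. V l)))" for I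
  proof -
    let ?tot = "\<Sum>l\<in>UNIV. real (card (j l))"
    have split: "?tot = (\<Sum>l\<in>I. real (card (j l))) + (\<Sum>l\<in>-I. real (card (j l)))"
      using sum.Int_Diff[of UNIV "\<lambda>l. real (card (j l))" I] by (simp add: Compl_eq_Diff_UNIV)
    have "card (Sigma (-I) j) = (\<Sum>l\<in>-I. card (j l))"
      using fin by (simp add: card_SigmaI)
    moreover have "card (?vv ` Sigma (-I) j) = card (Sigma (-I) j)"
      using inj by (auto intro!: card_image inj_on_subset[OF inj])
    moreover have "card (?vv ` Sigma (-I) j) \<le> dim (span (\<Union>l\<in>- I. V l))"
    proof (rule independent_card_le_dim)
      show "independent (?vv ` Sigma (- I) j)"
        by (rule independent_mono[OF ind]) auto
      show "?vv ` Sigma (- I) j \<subseteq> span (\<Union>l\<in>- I. V l)"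
        proof
        fix x assume "x \<in> ?vv ` Sigma (- I) j"
        then obtain l k where lk: "l \<in> -I" "k \<in> j l" "x = v l k" by auto
        have "k \<in> {..<m l}" using jsub lk by auto
        then have "x \<in> V l" using hV lk by (metis span_base image_eqI)
        then show "x \<in> span (\<Union>l\<in>- I. V l)" using lk by (auto intro: span_base)
      qed
    qed
    ultimately have D: "(\<Sum>l\<in>-I. real (card (j l))) \<le> real (dim (span (\<Union>l\<in>- I. V l)))"
      by (metis of_nat_le_iff of_nat_sum)
    have S: "(\<Sum>l\<in>I. Jhat s j i $ l) = (\<Sum>l\<in>I. real (card (j l))) + (if i \<in> I then s - ?tot else 0)"
    proof -
      have "(\<Sum>l\<in>I. Jhat s j i $ l) = (\<Sum>l\<in>I. real (card (j l))) + (\<Sum>l\<in>I. (if l = i then s - ?tot else 0))"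
        unfolding Jhat_comp by (rule sum.distrib)
      then show ?thesis by (simp only: sum.delta finite_class.finite_UNIV finite_subset[OF subset_UNIV])
    qed
    show ?thesis
      using D S split stot by (cases "i \<in> I") auto
  qed
  then show ?thesis using nn by (simp add: Pset_def)
qed

lemma finite_JJbar: "finite (JJbar s m v)"
proof -
  have "{j. \<forall>i. j i \<subseteq> {..<m i}} = (\<Pi>\<^sub>E i\<in>UNIV. Pow {..<m i})"
    by (auto simp: PiE_def Pi_def extensional_def)
  then have "finite {j. \<forall>i. j i \<subseteq> {..<m i}}" by (simp add: finite_PiE)
  then have "finite ({j. \<forall>i. j i \<subseteq> {..<m i}} \<times> (UNIV::'a set))" by simp
  moreover have "JJbar s m v \<subseteq> {j. \<forall>i. j i \<subseteq> {..<m i}} \<times> (UNIV::'a set)"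
    by (auto simp: JJbar_def JJ_def)
  ultimately show ?thesis by (rule finite_subset[rotated])
qed

lemma ext_indep:
  fixes g :: "'b \<Rightarrow> 'a::euclidean_space"
  assumes "finite Y" "X \<subseteq> Y" "inj_on g X" "independent (g ` X)"
  shows "\<exists>Z. X \<subseteq> Z \<and> Z \<subseteq> Y \<and> inj_on g Z \<and> independent (g ` Z) \<and> dim (span (g ` Y)) \<le> card Z"
proof -
  obtain C where C: "g ` X \<subseteq> C" "C \<subseteq> g ` Y" "independent C" "g ` Y \<subseteq> span C"
    using maximal_independent_subset_extend[of "g ` X" "g ` Y"] assms by blast
  let ?h = "inv_into Y g"
  define Z where "Z = X \<union> ?h ` (C - g ` X)"
  have hY: "?h ` (C - g ` X) \<subseteq> Y" using C(2) by (auto intro: inv_into_into)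
  have gh: "g (?h c) = c" if "c \<in> C" for c using C(2) that by (auto intro: f_inv_into_f)
  have gZ: "g ` Z = C" unfolding Z_def using C(1) gh by (auto simp: image_Un image_image)
  have inj2: "inj_on g (?h ` (C - g ` X))"
    by (rule inj_onI) (auto simp: gh)
  have injZ: "inj_on g Z" unfolding Z_def inj_on_Un
    using assms(3) inj2 by (auto simp: gh)
  have "finite C" using C(2) assms(1) finite_subset by blast
  then have "dim (span (g ` Y)) \<le> card C"
    using C(4) by (simp add: dim_span dim_le_card)
  also have "card C = card Z" using card_image[OF injZ] gZ by simp
  finally have "dim (span (g ` Y)) \<le> card Z" .
  moreover have "X \<subseteq> Z" "Z \<subseteq> Y" using assms(2) hY unfolding Z_def by auto
  ultimately show ?thesis using injZ gZ C(3) by blast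
qed

lemma chain_indep:
  fixes g :: "'b \<Rightarrow> 'a::euclidean_space"
  assumes fin: "\<And>k. finite (Y k)" and mono: "\<And>k. Y k \<subseteq> Y (Suc k)"
  shows "\<exists>B. B \<subseteq> Y q \<and> inj_on g B \<and> independent (g ` B) \<and>
             (\<forall>k\<le>q. dim (span (g ` Y k)) \<le> card (B \<inter> Y k))"
proof (induction q)
  case 0
  obtain Z where "{} \<subseteq> Z" "Z \<subseteq> Y 0" "inj_on g Z" "independent (g ` Z)" "dim (span (g ` Y 0)) \<le> card Z"
    using ext_indep[of "Y 0" "{}" g] fin independent_empty by auto
  then show ?case by (intro exI[of _ Z]) (auto simp: Int_absorb2)
next
  case (Suc q)
  then obtain B where B: "B \<subseteq> Y q" "inj_on g B" "independent (g ` B)"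
    "\<forall>k\<le>q. dim (span (g ` Y k)) \<le> card (B \<inter> Y k)" by blast
  obtain Z where Z: "B \<subseteq> Z" "Z \<subseteq> Y (Suc q)" "inj_on g Z" "independent (g ` Z)"
    "dim (span (g ` Y (Suc q))) \<le> card Z"
    using ext_indep[of "Y (Suc q)" B g] fin mono B by blast
  have "dim (span (g ` Y k)) \<le> card (Z \<inter> Y k)" if "k \<le> Suc q" for k
  proof (cases "k = Suc q")
    case True then show ?thesis using Z by (simp add: Int_absorb2)
  next
    case False
    then have "k \<le> q" using that by simp
    then have "dim (span (g ` Y k)) \<le> card (B \<inter> Y k)" using B by simp
    also have "\<dots> \<le> card (Z \<inter> Y k)" using Z(1) fin by (intro card_mono) auto
    finally show ?thesis .
  qed
  then show ?case using Z by blast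
qed

lemma abel:
  fixes w z :: "'b \<Rightarrow> real"
  assumes "\<forall>k<length L. 0 \<le> sum_list (map z (drop k L))" "sorted (map w L)" "L \<noteq> []"
  shows "w (hd L) * sum_list (map z L) \<le> sum_list (map (\<lambda>l. w l * z l) L)"
  using assms
proof (induction L)
  case Nil then show ?case by simp
next
  case (Cons a L)
  show ?case
  proof (cases "L = []")
    case True then show ?thesis by simp
  next
    case False
    have suf: "\<forall>k<length L. 0 \<le> sum_list (map z (drop k L))"
      using Cons.prems(1) by (metis Suc_less_eq drop_Suc_Cons length_Cons)
    have IH: "w (hd L) * sum_list (map z L) \<le> sum_list (map (\<lambda>l. w l * z l) L)"
      using Cons.IH[OF suf] Cons.prems(2) False by simp
    have "w a \<le> w (hd L)" using Cons.prems(2) False by (cases L) auto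
    moreover have "0 \<le> sum_list (map z L)" using suf False by (metis drop0 length_greater_0_conv)
    ultimately have "w a * sum_list (map z L) \<le> w (hd L) * sum_list (map z L)"
      by (simp add: mult_right_mono)
    then show ?thesis using IH by (simp add: algebra_simps)
  qed
qed


lemma Jhat_sum:
  "(\<Sum>l\<in>U. Jhat s j i $ l) = (\<Sum>l\<in>U. real (card (j l))) +
      (if i \<in> U then s - (\<Sum>l\<in>UNIV. real (card (j l))) else 0)"
proof -
  let ?tot = "\<Sum>l\<in>UNIV. real (card (j l))"
  have "(\<Sum>l\<in>U. Jhat s j i $ l) = (\<Sum>l\<in>U. real (card (j l))) + (\<Sum>l\<in>U. (if l = i then s - ?tot else 0))"
    unfolding Jhat_comp by (rule sum.distrib)
  then show ?thesis by (simp only: sum.delta finite_class.finite_UNIV finite_subset[OF subset_UNIV])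
qed

lemma sum_compl_split:
  fixes g :: "'n::finite \<Rightarrow> real"
  shows "(\<Sum>l\<in>UNIV. g l) = (\<Sum>l\<in>U. g l) + (\<Sum>l\<in>-U. g l)"
  using sum.Int_Diff[of UNIV g U] by (simp add: Compl_eq_Diff_UNIV)

lemma drop_compl:
  assumes "distinct xs" "set xs = UNIV"
  shows "set (drop k xs) = - set (take k xs)"
proof -
  have "set (take k xs) \<union> set (drop k xs) = UNIV"
    by (metis set_append append_take_drop_id assms(2))
  moreover have "set (take k xs) \<inter> set (drop k xs) = {}"
    using set_take_disj_set_drop_if_distinct[OF assms(1), of k k] by simp
  ultimately show ?thesis by auto
qed


lemma greedy:
  fixes s :: real and d :: "real^'n::finite"
    and V :: "'n \<Rightarrow> 'a::euclidean_space set"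
    and m :: "'n \<Rightarrow> nat" and v :: "'n \<Rightarrow> nat \<Rightarrow> 'a" and w :: "'n \<Rightarrow> real"
  assumes s0: "0 \<le> s" and hV: "\<forall>i. V i = span (v i ` {..<m i})"
    and dP: "d \<in> Pset s V" and w0: "\<forall>l. 0 \<le> w l"
  shows "\<exists>(j, i)\<in>JJbar s m v. \<forall>d'\<in>Pset s V.
           (\<Sum>l\<in>UNIV. w l * Jhat s j i $ l) \<le> (\<Sum>l\<in>UNIV. w l * d' $ l)"
proof -
  obtain xs where xs: "set xs = (UNIV::'n set)" "distinct xs"
    using finite_distinct_list[OF finite_class.finite_UNIV] by blast
  define \<sigma> where "\<sigma> = sort_key w xs"
  have \<sigma>: "set \<sigma> = UNIV" "distinct \<sigma>" "sorted (map w \<sigma>)"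
    using xs unfolding \<sigma>_def by auto
  define n where "n = length \<sigma>"
  have \<sigma>ne: "\<sigma> \<noteq> []" using \<sigma>(1) by auto
  then have n1: "1 \<le> n" unfolding n_def by (cases \<sigma>) auto
  define vv where "vv = (\<lambda>(i::'n,k::nat). v i k)"
  define E where "E T = Sigma T (\<lambda>i. {..<m i})" for T
  define T where "T k = set (take k \<sigma>)" for k
  define f where "f k = dim (span (vv ` E (T k)))" for k
  have fV: "dim (span (\<Union>i\<in>T k. V i)) = f k" for k
    unfolding f_def vv_def E_def using span_V[OF hV] by simp
  have compl: "- set (drop k \<sigma>) = T k" for k
    unfolding T_def using drop_compl[OF \<sigma>(2,1)] by simp
  have Tn: "T n = UNIV" unfolding T_def n_def using \<sigma>(1) by simp
  have dPI: "\<forall>I. s \<le> (\<Sum>i\<in>I. d' $ i) + real (dim (span (\<Union>i\<in>-I. V i)))" and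
    dnn: "\<forall>i. 0 \<le> d' $ i" if "d' \<in> Pset s V" for d'
    using that by (auto simp: Pset_def)
  have fn: "s \<le> real (f n)"
    using dPI[OF dP, rule_format, of "{}"] fV[of n] Tn by simp
  define p where "p = (LEAST q. 1 \<le> q \<and> s \<le> real (f q))"
  have p1: "1 \<le> p" and fp: "s \<le> real (f p)"
    using LeastI[of "\<lambda>q. 1 \<le> q \<and> s \<le> real (f q)" n] n1 fn unfolding p_def by auto
  have pn: "p \<le> n" using Least_le[of "\<lambda>q. 1 \<le> q \<and> s \<le> real (f q)" n] n1 fn unfolding p_def by auto
  have below: "real (f q) \<le> s" if "q < p" for q
  proof (cases "q = 0")
    case True
    then have "E (T q) = {}" unfolding E_def T_def by simp
    then show ?thesis using s0 unfolding f_def by simp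
  next
    case False
    then have "\<not> (1 \<le> q \<and> s \<le> real (f q))"
      using not_less_Least[of q "\<lambda>q. 1 \<le> q \<and> s \<le> real (f q)"] that unfolding p_def by blast
    then show ?thesis using False by simp
  qed
  have finE: "finite (E (T k))" for k unfolding E_def by auto
  have monoT: "T k \<subseteq> T k'" if "k \<le> k'" for k k'
    unfolding T_def using that by (simp add: set_take_subset_set_take)
  have monoE: "E (T k) \<subseteq> E (T (Suc k))" for k
    unfolding E_def using monoT[of k "Suc k"] by auto
  obtain B where B: "B \<subseteq> E (T p)" "inj_on vv B" "independent (vv ` B)"
    "\<forall>k\<le>p. f k \<le> card (B \<inter> E (T k))"
    using chain_indep[where Y="\<lambda>k. E (T k)" and g=vv and q=p] finE monoE unfolding f_def by blast
  define j where "j l = {k. (l,k) \<in> B}" for l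
  define i where "i = \<sigma> ! (p - 1)"
  have jsub: "\<forall>l. j l \<subseteq> {..<m l}" using B(1) unfolding j_def E_def by auto
  have finj: "finite (j l)" for l using jsub finite_subset by blast
  have SigB: "Sigma UNIV j = B" using B(1) unfolding j_def E_def by auto
  have cntE: "(\<Sum>l\<in>U. real (card (j l))) = real (card (B \<inter> E U))" for U
  proof -
    have "B \<inter> E U = Sigma U j" using B(1) unfolding j_def E_def by auto
    then have "card (B \<inter> E U) = (\<Sum>l\<in>U. card (j l))" using finj by simp
    then show ?thesis by simp
  qed
  have jempty: "j l = {}" if "l \<notin> T p" for l using B(1) that unfolding j_def E_def by auto
  let ?tot = "\<Sum>l\<in>UNIV. real (card (j l))"
  have "B \<inter> E UNIV = B" using B(1) unfolding E_def by auto
  then have totB: "?tot = real (card B)" using cntE[of UNIV] by simp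
  have "B \<inter> E (T p) = B" using B(1) by auto
  then have cardB: "real (f p) \<le> real (card B)" using B(4) by (metis order_refl of_nat_le_iff)
  have JJ: "j \<in> JJ s m v"
    unfolding JJ_def using jsub SigB B(2,3) cardB fp totB unfolding vv_def by auto
  have pl: "p - 1 < length \<sigma>" using pn p1 unfolding n_def by simp
  have takep: "take p \<sigma> = take (p - 1) \<sigma> @ [i]"
    using take_Suc_conv_app_nth[OF pl] p1 unfolding i_def by simp
  have inotin: "i \<notin> T (p - 1)"
    using distinct_take[of \<sigma> p] \<sigma>(2) takep unfolding T_def by simp
  have Tp: "T p = insert i (T (p - 1))" using takep unfolding T_def by simp
  have cntTp: "(\<Sum>l\<in>T p. real (card (j l))) = (\<Sum>l\<in>T (p-1). real (card (j l))) + real (card (j i))"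
    using Tp inotin by (simp add: add.commute)
  have cntcTp: "(\<Sum>l\<in>-T p. real (card (j l))) = 0" using jempty by simp
  have totTp: "?tot = (\<Sum>l\<in>T p. real (card (j l)))"
    using sum_compl_split[of "\<lambda>l. real (card (j l))" "T p"] cntcTp by simp
  have cardle: "card (B \<inter> E (T k)) \<le> f k" for k
  proof -
    have "card (vv ` (B \<inter> E (T k))) \<le> dim (span (vv ` E (T k)))"
    proof (rule independent_card_le_dim)
      show "vv ` (B \<inter> E (T k)) \<subseteq> span (vv ` E (T k))" by (auto intro: span_base)
      show "independent (vv ` (B \<inter> E (T k)))" by (rule independent_mono[OF B(3)]) auto
    qed
    moreover have "card (vv ` (B \<inter> E (T k))) = card (B \<inter> E (T k))"
      by (rule card_image, rule inj_on_subset[OF B(2)]) auto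
    ultimately show ?thesis unfolding f_def by simp
  qed
  have Ji: "Jhat s j i $ i = s - (\<Sum>l\<in>T (p-1). real (card (j l)))"
    using cntTp totTp by (simp add: Jhat_comp)
  have Jinn: "0 \<le> Jhat s j i $ i"
    using Ji cntE[of "T (p-1)"] cardle[of "p-1"] below[of "p-1"] p1 by simp
  have Jnn: "\<forall>l. 0 \<le> Jhat s j i $ l"
  proof
    fix l show "0 \<le> Jhat s j i $ l"
      using Jinn by (cases "l = i") (auto simp: Jhat_comp)
  qed
  have JJbar: "(j, i) \<in> JJbar s m v" unfolding JJbar_def using JJ Jnn by auto
  have main: "(\<Sum>l\<in>UNIV. w l * Jhat s j i $ l) \<le> (\<Sum>l\<in>UNIV. w l * d' $ l)" if d'P: "d' \<in> Pset s V" for d'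
  proof -
    define z where "z l = d' $ l - Jhat s j i $ l" for l
    have suf: "0 \<le> sum_list (map z (drop k \<sigma>))" if "k < length \<sigma>" for k
    proof -
      let ?U = "set (drop k \<sigma>)"
      have "sum_list (map z (drop k \<sigma>)) = (\<Sum>l\<in>?U. z l)"
        using \<sigma>(2) by (simp add: sum_list_distinct_conv_sum_set)
      also have "\<dots> = (\<Sum>l\<in>?U. d' $ l) - (\<Sum>l\<in>?U. Jhat s j i $ l)"
        unfolding z_def by (simp add: sum_subtractf)
      finally have eq: "sum_list (map z (drop k \<sigma>)) = (\<Sum>l\<in>?U. d' $ l) - (\<Sum>l\<in>?U. Jhat s j i $ l)" .
      have spl: "?tot = (\<Sum>l\<in>?U. real (card (j l))) + (\<Sum>l\<in>T k. real (card (j l)))"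
        using sum_compl_split[of "\<lambda>l. real (card (j l))" ?U] compl[of k] by simp
      show ?thesis
      proof (cases "k < p")
        case True
        have "i \<notin> T k"
        proof
          assume "i \<in> T k"
          then obtain q where q: "q < length (take k \<sigma>)" "take k \<sigma> ! q = i"
            unfolding T_def by (auto simp: in_set_conv_nth)
          then have "\<sigma> ! q = \<sigma> ! (p - 1)" "q < length \<sigma>" unfolding i_def by auto
          then have "q = p - 1" using nth_eq_iff_index_eq[OF \<sigma>(2)] pl by blast
          then show False using q True p1 by auto
        qed
        then have iU: "i \<in> ?U" using compl[of k] by auto
        have "(\<Sum>l\<in>?U. Jhat s j i $ l) = s - (\<Sum>l\<in>T k. real (card (j l)))"
          using Jhat_sum[where U="?U" and s=s and j=j and i=i] iU spl by simp
        also have "\<dots> \<le> s - real (f k)"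
          using cntE[of "T k"] B(4) True by simp
        also have "\<dots> \<le> (\<Sum>l\<in>?U. d' $ l)"
          using dPI[OF d'P, rule_format, of ?U] compl[of k] fV[of k] by simp
        finally show ?thesis using eq by simp
      next
        case False
        have "i \<in> T k"
        proof -
          have "take k \<sigma> ! (p - 1) = i" "p - 1 < length (take k \<sigma>)"
            using False that p1 unfolding i_def by auto
          then show ?thesis unfolding T_def by (metis nth_mem)
        qed
        then have iU: "i \<notin> ?U" using compl[of k] by auto
        have "T p \<subseteq> T k" using monoT False by simp
        then have "(\<Sum>l\<in>?U. real (card (j l))) = 0"
        proof (intro sum.neutral ballI)
          fix x assume "x \<in> ?U"
          then have "x \<notin> T k" using compl[of k] by auto
          then have "x \<notin> T p" using \<open>T p \<subseteq> T k\<close> by auto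
          then show "real (card (j x)) = 0" using jempty by simp
        qed
        then have "(\<Sum>l\<in>?U. Jhat s j i $ l) = 0"
          using Jhat_sum[where U="?U" and s=s and j=j and i=i] iU by simp
        moreover have "0 \<le> (\<Sum>l\<in>?U. d' $ l)" using dnn[OF d'P] by (simp add: sum_nonneg)
        ultimately show ?thesis using eq by simp
      qed
    qed
    have "w (hd \<sigma>) * sum_list (map z \<sigma>) \<le> sum_list (map (\<lambda>l. w l * z l) \<sigma>)"
      using abel[of \<sigma> z w] suf \<sigma>(3) \<sigma>ne by auto
    moreover have "0 \<le> w (hd \<sigma>) * sum_list (map z \<sigma>)"
      using suf[of 0] \<sigma>ne w0 by simp
    ultimately have "0 \<le> sum_list (map (\<lambda>l. w l * z l) \<sigma>)" by linarith
    also have "\<dots> = (\<Sum>l\<in>UNIV. w l * z l)"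
      using \<sigma>(1,2) by (simp add: sum_list_distinct_conv_sum_set)
    also have "\<dots> = (\<Sum>l\<in>UNIV. w l * d' $ l) - (\<Sum>l\<in>UNIV. w l * Jhat s j i $ l)"
      unfolding z_def by (simp add: right_diff_distrib sum_subtractf)
    finally show ?thesis by simp
  qed
  show ?thesis using JJbar main by blast
qed


lemma convex_orthant: "convex {y::real^'n::finite. \<forall>i. 0 \<le> y $ i}"
  by (rule convexI) (simp add: add_nonneg_nonneg)

lemma inner_sum_vec: "inner (a::real^'n::finite) x = (\<Sum>l\<in>UNIV. a $ l * x $ l)"
  by (simp add: inner_vec_def)

theorem mainTheorem5:
  fixes s :: real and d :: "real^'n::finite"
    and V :: "'n \<Rightarrow> 'a::euclidean_space set"
    and m :: "'n \<Rightarrow> nat" and v :: "'n \<Rightarrow> nat \<Rightarrow> 'a"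
  assumes "0 \<le> s"
    and "\<forall>i. V i = span (v i ` {..<m i})"
    and "d \<in> Pset s V"
  shows "(\<forall>(j, i) \<in> JJbar s m v. Jhat s j i \<in> Pset s V) \<and>
         Pset s V = {x + y | x y. x \<in> convex hull ((\<lambda>(j, i). Jhat s j i) ` JJbar s m v)
                                 \<and> y \<in> coord_cone}"
proof -
  let ?G = "(\<lambda>(j, i). Jhat s j i) ` JJbar s m v"
  let ?Q = "{x + y | x y. x \<in> convex hull ?G \<and> y \<in> coord_cone}"
  have part1: "\<forall>(j, i) \<in> JJbar s m v. Jhat s j i \<in> Pset s V"
    using Jhat_in_P[OF assms(2)] by auto
  have GP: "?G \<subseteq> Pset s V" using part1 by auto
  have CHP: "convex hull ?G \<subseteq> Pset s V" by (rule hull_minimal[where S=convex, OF GP pset_convex])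
  have sup: "?Q \<subseteq> Pset s V"
  proof
    fix z assume "z \<in> ?Q"
    then obtain x y where z0: "z = x + y" "x \<in> convex hull ?G" "y \<in> coord_cone" by blast
    then have z: "z = x + y" "x \<in> Pset s V" "\<forall>i. 0 \<le> y $ i"
      using CHP coord_cone_eq by auto
    have hI: "\<forall>I. s \<le> (\<Sum>i\<in>I. x $ i) + real (dim (span (\<Union>i\<in>-I. V i)))" and xnn: "\<forall>i. 0 \<le> x $ i"
      using z(2) by (auto simp: Pset_def)
    have hle: "(\<Sum>i\<in>I. x $ i) \<le> (\<Sum>i\<in>I. (x + y) $ i)" for I
      using z(3) by (simp add: sum.distrib sum_nonneg)
    have "s \<le> (\<Sum>i\<in>I. (x + y) $ i) + real (dim (span (\<Union>i\<in>-I. V i)))" for I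
      using hI[rule_format, of I] hle[of I] by linarith
    moreover have "0 \<le> (x + y) $ i" for i using xnn z(3) by simp
    ultimately show "z \<in> Pset s V" using z(1) unfolding Pset_def by blast
  qed
  have GQ: "g \<in> ?Q" if "g \<in> ?G" for g
  proof -
    have "g \<in> convex hull ?G" using that by (rule hull_inc)
    moreover have "(0::real^'n) \<in> coord_cone" by (simp add: coord_cone_eq)
    moreover have "g = g + 0" by simp
    ultimately show ?thesis by blast
  qed
  have sub: "Pset s V \<subseteq> ?Q"
  proof
    fix d' assume d'P: "d' \<in> Pset s V"
    show "d' \<in> ?Q"
    proof (rule ccontr)
      assume nQ: "d' \<notin> ?Q"
      have Qeq: "?Q = (\<Union>x\<in>convex hull ?G. \<Union>y\<in>{y. \<forall>i. 0 \<le> y $ i}. {x + y})"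
        using coord_cone_eq by auto
      have cQ: "convex ?Q" unfolding Qeq by (rule convex_sums[OF convex_convex_hull convex_orthant])
      have clQ: "closed ?Q" unfolding Qeq
        by (rule compact_closed_sums[OF finite_imp_compact_convex_hull[OF finite_imageI[OF finite_JJbar]] closed_orthant])
      obtain a b where ab: "inner a d' < b" "\<forall>x\<in>?Q. b < inner a x"
        using separating_hyperplane_closed_point[OF cQ clQ nQ] by blast
      obtain j0 i0 where "(j0, i0) \<in> JJbar s m v"
        using greedy[OF assms(1,2,3), of "\<lambda>_. 0"] by auto
      then have g0: "Jhat s j0 i0 \<in> ?Q" using GQ by auto
      have anng: "0 \<le> a $ l" for l
      proof (rule ccontr)
        assume "\<not> 0 \<le> a $ l"
        then have al: "a $ l < 0" by simp
        define t where "t = (inner a (Jhat s j0 i0) - b) / (- a $ l)"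
        have b0: "b < inner a (Jhat s j0 i0)" using ab(2) g0 by blast
        have t0: "0 \<le> t" unfolding t_def using al b0 by (intro divide_nonneg_pos) auto
        have "t *\<^sub>R axis l 1 \<in> coord_cone" using t0 by (simp add: coord_cone_eq axis_comp)
        then have "Jhat s j0 i0 + t *\<^sub>R axis l 1 \<in> ?Q"
        proof -
          assume c: "t *\<^sub>R axis l 1 \<in> coord_cone"
          have "Jhat s j0 i0 \<in> convex hull ?G"
            using \<open>(j0, i0) \<in> JJbar s m v\<close> by (force intro: hull_inc)
          then show ?thesis using c by blast
        qed
        then have "b < inner a (Jhat s j0 i0 + t *\<^sub>R axis l 1)" using ab(2) by blast
        also have "inner a (Jhat s j0 i0 + t *\<^sub>R axis l 1) = inner a (Jhat s j0 i0) + t * a $ l"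
          by (simp add: inner_add_right inner_axis)
        also have "\<dots> = b" unfolding t_def using al by (simp add: field_simps)
        finally show False by simp
      qed
      obtain j i where ji: "(j, i) \<in> JJbar s m v"
        "\<forall>d''\<in>Pset s V. (\<Sum>l\<in>UNIV. a $ l * Jhat s j i $ l) \<le> (\<Sum>l\<in>UNIV. a $ l * d'' $ l)"
        using greedy[OF assms(1,2,3), of "\<lambda>l. a $ l"] anng by auto
      have "b < inner a (Jhat s j i)" using ab(2) GQ ji(1) by force
      also have "\<dots> \<le> inner a d'" using ji(2) d'P by (simp add: inner_sum_vec)
      finally show False using ab(1) by simp
    qed
  qed
  show ?thesis using part1 sup sub by blast
qed


end
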